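(* Let $k>0$, $\mu>0$ and define, for a second-rank tensor $\mathbf A$ on $\mathbb{R}^3$ with $\det\mathbf A>0$, $$\rho_{\mathrm R}\psi_{\mathrm{el}}(\mathbf A):=\frac{k}{2}\Big(\ln\sqrt{\det\mathbf A}\Big)^2+\frac{\mu}{2}\Big(\operatorname{tr}\big((\det\mathbf A)^{-1/3}\mathbf A\big)-3\Big).$$ Let $M$ be the set of symmetric positive definite second-rank tensors on $\mathbb{R}^3$ with determinant $1$, and for $\mathbf C^{(1)},\mathbf C^{(2)}\in M$ put $\mathrm{Dist}(\mathbf C^{(1)},\mathbf C^{(2)}):=\sqrt{\rho_{\mathrm R}\psi_{\mathrm{el}}\big(\mathbf C^{(1)}(\mathbf C^{(2)})^{-1}\big)}$. Let $L<\infty$. Then there exist constants $\varepsilon>0$, $C_3>0$ and $C_4<\infty$ such that for all $\mathbf C^{(1)},\mathbf C^{(2)}\in M$ satisfying $\|(\mathbf C^{(j)})^{1/2}\|<L$ and $\|(\mathbf C^{(j)})^{-1/2}\|<L$ for $j\in\{1,2\}$ and $\|\mathbf C^{(1)}-\mathbf C^{(2)}\|\le\varepsilon$, one has $$C_3\,\|\mathbf C^{(1)}-\mathbf C^{(2)}\|\le \mathrm{Dist}(\mathbf C^{(1)},\mathbf C^{(2)})\le C_4\,\|\mathbf C^{(1)}-\mathbf C^{(2)}\|.$$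
   Context: $\|\mathbf A\|=\sqrt{\operatorname{tr}(\mathbf A\mathbf A^{\mathrm T})}$ is the Frobenius norm; $\mathbf C^{1/2}$ is the symmetric positive definite square root. $\rho_{\mathrm R}\psi_{\mathrm{el}}$ is treated as a single function. *)

theory Defs
  imports "HOL-Analysis.Analysis"
begin

type_synonym mat3 = "real^3^3"

definition frob :: "mat3 \<Rightarrow> real" where
  "frob A = sqrt (trace (A ** transpose A))"

definition sym_posdef :: "mat3 \<Rightarrow> bool" where
  "sym_posdef A \<longleftrightarrow> transpose A = A \<and> (\<forall>x::real^3. x \<noteq> 0 \<longrightarrow> x \<bullet> (A *v x) > 0)"

definition msqrt :: "mat3 \<Rightarrow> mat3" where
  "msqrt C = (THE S. sym_posdef S \<and> S ** S = C)"

definition psi_el :: "real \<Rightarrow> real \<Rightarrow> mat3 \<Rightarrow> real" where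
  "psi_el k \<mu> A = k / 2 * (ln (sqrt (det A)))^2
     + \<mu> / 2 * (trace ((det A powr (-1/3)) *\<^sub>R A) - 3)"

definition Mset :: "mat3 set" where
  "Mset = {C. sym_posdef C \<and> det C = 1}"

definition Dist :: "real \<Rightarrow> real \<Rightarrow> mat3 \<Rightarrow> mat3 \<Rightarrow> real" where
  "Dist k \<mu> C1 C2 = sqrt (psi_el k \<mu> (C1 ** matrix_inv C2))"

end

theory Submission
  imports Defs "HOL-Analysis.Cross3"
begin

unbundle cross3_syntax


lemma nsq_vec: "(norm (v::real^'n))^2 = (\<Sum>i\<in>UNIV. (v$i)^2)"
  by (simp add: norm_vec_def L2_set_def sum_nonneg)

lemma nsq_mat: "(norm (A::real^'n^'m))^2 = (\<Sum>i\<in>UNIV. (norm (A$i))^2)"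
  by (simp add: norm_vec_def L2_set_def sum_nonneg)

lemma frob_norm: "frob A = norm A"
proof -
  have "trace (A ** transpose A) = (\<Sum>i\<in>UNIV. (norm (A$i))^2)"
    unfolding nsq_vec
    by (simp add: trace_def matrix_matrix_mult_def transpose_def power2_eq_square)
  then show ?thesis by (simp add: frob_def nsq_mat[symmetric])
qed

lemma t3: "(1::3) \<noteq> 2" "(1::3) \<noteq> 3" "(2::3) \<noteq> 3" 
  by (simp_all add: exhaust_3)



lemma mv_row: "(A *v x) $ i = (A$i) \<bullet> (x::real^'n)"
  by (simp add: matrix_vector_mult_def inner_vec_def mult.commute)

lemma norm_mv: "norm ((A::real^'n^'m) *v x) \<le> norm A * norm x"
proof -
  have "(norm (A *v x))^2 \<le> (norm A * norm x)^2"
  proof -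
    have "(norm (A *v x))^2 = (\<Sum>i\<in>UNIV. ((A$i) \<bullet> x)^2)" by (simp add: nsq_vec mv_row)
    also have "\<dots> \<le> (\<Sum>i\<in>UNIV. (norm (A$i))^2 * (norm x)^2)"
    proof (rule sum_mono)
      fix i
      have "\<bar>(A$i) \<bullet> x\<bar> \<le> norm (A$i) * norm x" by (rule Cauchy_Schwarz_ineq2)
      then have "\<bar>(A$i) \<bullet> x\<bar>^2 \<le> (norm (A$i) * norm x)^2"
        by (rule power_mono) simp
      then show "((A$i) \<bullet> x)^2 \<le> (norm (A$i))^2 * (norm x)^2" by (simp add: power_mult_distrib)
    qed
    also have "\<dots> = (norm A * norm x)^2" by (simp add: nsq_mat power_mult_distrib sum_distrib_right)
    finally show ?thesis .
  qed
  then show ?thesis using power2_le_imp_le by (metis mult_nonneg_nonneg norm_ge_zero)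
qed

lemma norm_transpose: "norm (transpose (A::real^'n^'m)) = norm A"
proof -
  have "(norm (transpose A))^2 = (norm A)^2"
    unfolding nsq_mat nsq_vec by (simp add: transpose_def sum.swap[of _ "UNIV::'n set"])
  then show ?thesis by (simp add: power2_eq_iff_nonneg)
qed

lemma mm_row: "((A::real^'n^'m) ** B) $ i = transpose B *v (A $ i)"
  unfolding vec_eq_iff matrix_matrix_mult_def matrix_vector_mult_def transpose_def
  by (auto intro!: sum.cong simp: mult.commute)

lemma norm_mm: "norm ((A::real^'n^'m) ** (B::real^'k^'n)) \<le> norm A * norm B"
proof -
  have "(norm (A ** B))^2 \<le> (norm A * norm B)^2"
  proof -
    have "(norm (A ** B))^2 = (\<Sum>i\<in>UNIV. (norm (transpose B *v (A$i)))^2)" by (simp add: nsq_mat mm_row)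
    also have "\<dots> \<le> (\<Sum>i\<in>UNIV. (norm (A$i))^2 * (norm B)^2)"
    proof (rule sum_mono)
      fix i
      have "norm (transpose B *v (A$i)) \<le> norm B * norm (A$i)" using norm_mv[of "transpose B"] norm_transpose by metis
      then have "(norm (transpose B *v (A$i)))^2 \<le> (norm B * norm (A$i))^2"
        by (rule power_mono) simp
      then show "(norm (transpose B *v (A$i)))^2 \<le> (norm (A$i))^2 * (norm B)^2" by (simp add: power_mult_distrib mult.commute)
    qed
    also have "\<dots> = (norm A * norm B)^2" by (simp add: nsq_mat power_mult_distrib sum_distrib_right)
    finally show ?thesis .
  qed
  then show ?thesis using power2_le_imp_le by (metis mult_nonneg_nonneg norm_ge_zero)
qed

lemma sym_inner: "transpose A = A \<Longrightarrow> x \<bullet> ((A::real^'n^'n) *v y) = (A *v x) \<bullet> y"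
  by (metis dot_lmul_matrix transpose_matrix_vector)

lemma inv_unique: "(A::real^'n^'n) ** B = mat 1 \<Longrightarrow> matrix_inv A = B"
proof -
  assume AB: "A ** B = mat 1"
  then have BA: "B ** A = mat 1" using matrix_left_right_inverse by blast
  have "\<exists>A'. A ** A' = mat 1 \<and> A' ** A = mat 1" using AB BA by blast
  then have h: "A ** matrix_inv A = mat 1 \<and> matrix_inv A ** A = mat 1"
    unfolding matrix_inv_def by (rule someI_ex)
  have "matrix_inv A = matrix_inv A ** (A ** B)" by (simp add: AB)
  also have "\<dots> = B" by (simp add: matrix_mul_assoc h)
  finally show ?thesis .
qed



lemma eig_exists:
  fixes A :: "real^'n^'n"
  assumes sym: "transpose A = A" and sub: "subspace V" and inv: "\<forall>x\<in>V. A *v x \<in> V"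
    and nz: "x0 \<in> V" "x0 \<noteq> 0"
  shows "\<exists>v\<in>V. norm v = 1 \<and> A *v v = (v \<bullet> (A *v v)) *\<^sub>R v"
proof -
  define K where "K = V \<inter> sphere 0 1"
  have "compact K" unfolding K_def
    by (rule closed_Int_compact[OF closed_subspace[OF sub] compact_sphere])
  have "(1/norm x0) *\<^sub>R x0 \<in> K" using nz sub by (simp add: K_def subspace_scale)
  then have "K \<noteq> {}" by auto
  have "continuous_on K (\<lambda>x. x \<bullet> (A *v x))" by (intro continuous_intros)
  from continuous_attains_sup[OF \<open>compact K\<close> \<open>K \<noteq> {}\<close> this]
  obtain v where vK: "v \<in> K" and vmax: "\<And>y. y \<in> K \<Longrightarrow> y \<bullet> (A *v y) \<le> v \<bullet> (A *v v)" by blast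
  define l where "l = v \<bullet> (A *v v)"
  have vV: "v \<in> V" and nv: "norm v = 1" using vK by (auto simp: K_def)
  have vv: "v \<bullet> v = 1" using nv by (simp add: dot_square_norm)
  have bound: "x \<bullet> (A *v x) \<le> l * (x \<bullet> x)" if "x \<in> V" for x
  proof (cases "x = 0")
    case True then show ?thesis by simp
  next
    case False
    let ?y = "(1/norm x) *\<^sub>R x"
    have "?y \<in> K" using that False sub by (simp add: K_def subspace_scale)
    then have le: "?y \<bullet> (A *v ?y) \<le> l" using vmax l_def by blast
    have eq: "?y \<bullet> (A *v ?y) = (x \<bullet> (A *v x)) / (norm x)^2"
      by (simp add: matrix_vector_mult_scaleR power2_eq_square)
    have pos: "(norm x)^2 > 0" using False by simp
    have "(x \<bullet> (A *v x)) / (norm x)^2 \<le> l" using le by (simp only: eq)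
    then have "x \<bullet> (A *v x) \<le> l * (norm x)^2" using pos by (simp only: divide_le_eq) 
    then show ?thesis by (simp add: dot_square_norm)
  qed
  define w where "w = A *v v - l *\<^sub>R v"
  have wV: "w \<in> V" unfolding w_def using sub inv vV by (simp add: subspace_diff subspace_scale)
  have wv: "w \<bullet> v = 0" by (simp add: w_def inner_diff_left l_def vv inner_commute[of "A *v v" v])
  have vw: "v \<bullet> w = 0" using wv by (simp add: inner_commute)
  have "A *v v = w + l *\<^sub>R v" by (simp add: w_def)
  then have wAv: "w \<bullet> (A *v v) = w \<bullet> w" by (simp add: inner_add_right wv)
  define fw where "fw = w \<bullet> (A *v w)"
  have key: "2 * t * (w \<bullet> w) \<le> t^2 * (l * (w \<bullet> w) - fw)" for t
  proof -
    have "v + t *\<^sub>R w \<in> V" using sub vV wV by (simp add: subspace_add subspace_scale)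
    from bound[OF this] have b: "(v + t *\<^sub>R w) \<bullet> (A *v (v + t *\<^sub>R w)) \<le> l * ((v + t *\<^sub>R w) \<bullet> (v + t *\<^sub>R w))" .
    moreover have e1: "(v + t *\<^sub>R w) \<bullet> (A *v (v + t *\<^sub>R w)) = l + 2 * t * (w \<bullet> w) + t^2 * fw"
    proof -
      have s: "v \<bullet> (A *v w) = w \<bullet> (A *v v)" using sym_inner[OF sym, of v w] by (simp add: inner_commute)
      show ?thesis
        by (simp add: matrix_vector_right_distrib matrix_vector_mult_scaleR inner_add_left inner_add_right
            s wAv l_def fw_def power2_eq_square algebra_simps)
    qed
    moreover have e2: "(v + t *\<^sub>R w) \<bullet> (v + t *\<^sub>R w) = 1 + t^2 * (w \<bullet> w)"
      by (simp add: inner_add_left inner_add_right vv wv vw power2_eq_square)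
    from b have "l + 2 * t * (w \<bullet> w) + t^2 * fw \<le> l * (1 + t^2 * (w \<bullet> w))" by (simp only: e1 e2)
    then show ?thesis by (simp add: algebra_simps)
  qed
  have "w \<bullet> w = 0"
  proof (rule ccontr)
    assume "w \<bullet> w \<noteq> 0"
    then have p: "w \<bullet> w > 0" by (simp add: order_less_le)
    define M where "M = \<bar>l * (w \<bullet> w) - fw\<bar> + 1"
    have M: "M \<ge> 1" by (simp add: M_def)
    define t where "t = (w \<bullet> w) / M"
    have t: "t > 0" using p M by (simp add: t_def)
    have "2 * t * (w \<bullet> w) \<le> t^2 * (l * (w \<bullet> w) - fw)" by (rule key)
    also have "\<dots> \<le> t^2 * (M - 1)" by (intro mult_left_mono) (auto simp: M_def)
    finally have "2 * (w \<bullet> w) \<le> t * (M - 1)" using t by (simp add: power2_eq_square)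
    also have "t * (M - 1) < w \<bullet> w" using p M by (simp add: t_def field_simps)
    finally show False using p by simp
  qed
  then have "w = 0" by simp
  then show ?thesis using vV nv by (auto simp: w_def l_def)
qed




lemma sub_perp: "subspace {x::real^'n. x \<bullet> a = 0}"
  by (simp add: subspace_def inner_add_left)

lemma sub_perp2: "subspace {x::real^'n. x \<bullet> a = 0 \<and> x \<bullet> b = 0}"
  by (simp add: subspace_def inner_add_left)

lemma perp_exists:
  fixes v :: "real^3" assumes "norm v = 1"
  shows "\<exists>x. x \<bullet> v = 0 \<and> x \<noteq> 0"
proof (rule ccontr)
  assume H: "\<not> ?thesis"
  have sq: "(v$k)^2 = 1" for k
  proof -
    have "v \<times> axis k 1 = 0" using H dot_cross_self(1)[of v "axis k 1"] by (metis inner_commute)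
    then show ?thesis using norm_cross_dot[of v "axis k 1"] assms by (simp add: inner_axis)
  qed
  have "(norm v)^2 = 3" by (simp add: nsq_vec sum_3 sq)
  then show False using assms by simp
qed

lemma spectral3:
  fixes A :: "real^3^3" assumes sym: "transpose A = A"
  shows "\<exists>(u::3 \<Rightarrow> real^3) (d::3 \<Rightarrow> real). (\<forall>i j. u i \<bullet> u j = (if i = j then 1 else 0)) \<and> (\<forall>i. A *v u i = d i *\<^sub>R u i)"
proof -
  have "axis 1 1 \<noteq> (0::real^3)" by (simp add: axis_eq_0_iff)
  from eig_exists[OF sym subspace_UNIV _ _ this] obtain v1 where
    n1: "norm v1 = 1" and e1: "A *v v1 = (v1 \<bullet> (A *v v1)) *\<^sub>R v1" by auto
  define l1 where "l1 = v1 \<bullet> (A *v v1)"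
  have inv1: "\<forall>x\<in>{x. x \<bullet> v1 = 0}. A *v x \<in> {x. x \<bullet> v1 = 0}"
  proof
    fix x assume "x \<in> {x. x \<bullet> v1 = 0}"
    then have "x \<bullet> v1 = 0" by simp
    then have "(A *v x) \<bullet> v1 = 0" using sym_inner[OF sym, of x v1] e1 by (simp add: l1_def[symmetric])
    then show "A *v x \<in> {x. x \<bullet> v1 = 0}" by simp
  qed
  obtain x1 where x1: "x1 \<bullet> v1 = 0" "x1 \<noteq> 0" using perp_exists[OF n1] by blast
  from eig_exists[OF sym sub_perp inv1, of x1] x1 obtain v2 where
    v2p: "v2 \<bullet> v1 = 0" and n2: "norm v2 = 1" and e2: "A *v v2 = (v2 \<bullet> (A *v v2)) *\<^sub>R v2" by auto
  define l2 where "l2 = v2 \<bullet> (A *v v2)"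
  have inv2: "\<forall>x\<in>{x. x \<bullet> v1 = 0 \<and> x \<bullet> v2 = 0}. A *v x \<in> {x. x \<bullet> v1 = 0 \<and> x \<bullet> v2 = 0}"
  proof
    fix x assume "x \<in> {x. x \<bullet> v1 = 0 \<and> x \<bullet> v2 = 0}"
    then have "x \<bullet> v1 = 0" "x \<bullet> v2 = 0" by simp_all
    then have "(A *v x) \<bullet> v1 = 0" "(A *v x) \<bullet> v2 = 0"
      using sym_inner[OF sym, of x v1] sym_inner[OF sym, of x v2] e1 e2
      by (simp_all add: l1_def[symmetric] l2_def[symmetric])
    then show "A *v x \<in> {x. x \<bullet> v1 = 0 \<and> x \<bullet> v2 = 0}" by simp
  qed
  have c1: "(v1 \<times> v2) \<bullet> v1 = 0" "(v1 \<times> v2) \<bullet> v2 = 0"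
    using dot_cross_self by (metis inner_commute)+
  have "v1 \<times> v2 \<noteq> 0" using norm_cross_dot[of v1 v2] n1 n2 v2p by (auto simp: inner_commute)
  from eig_exists[OF sym sub_perp2 inv2, of "v1 \<times> v2"] c1 this obtain v3 where
    v3p: "v3 \<bullet> v1 = 0" "v3 \<bullet> v2 = 0" and n3: "norm v3 = 1" and e3: "A *v v3 = (v3 \<bullet> (A *v v3)) *\<^sub>R v3" by auto
  define l3 where "l3 = v3 \<bullet> (A *v v3)"
  define u where "u = (\<lambda>i::3. if i = 1 then v1 else if i = 2 then v2 else v3)"
  define d where "d = (\<lambda>i::3. if i = 1 then l1 else if i = 2 then l2 else l3)"
  have vv: "v1 \<bullet> v1 = 1" "v2 \<bullet> v2 = 1" "v3 \<bullet> v3 = 1" using n1 n2 n3 by (simp_all add: dot_square_norm)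
  have o: "v1 \<bullet> v2 = 0" "v1 \<bullet> v3 = 0" "v2 \<bullet> v3 = 0" using v2p v3p by (simp_all add: inner_commute)
  have "\<forall>i j. u i \<bullet> u j = (if i = j then 1 else 0)"
    unfolding forall_3 u_def using vv o v2p v3p t3 t3[symmetric] by simp
  moreover have "\<forall>i. A *v u i = d i *\<^sub>R u i"
    unfolding forall_3 u_def d_def using e1 e2 e3 t3 t3[symmetric] by (simp add: l1_def l2_def l3_def)
  ultimately show ?thesis by blast
qed



lemma mm_sub_l: "(A::real^'n^'m) ** (B - C) = A ** B - A ** C"
  by (simp add: vec_eq_iff matrix_matrix_mult_def sum_subtractf algebra_simps)
lemma mm_sub_r: "((B::real^'n^'m) - C) ** A = B ** A - C ** A"
  by (simp add: vec_eq_iff matrix_matrix_mult_def sum_subtractf algebra_simps)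
lemma mm_add_r: "((B::real^'n^'m) + C) ** A = B ** A + C ** A"
  by (simp add: vec_eq_iff matrix_matrix_mult_def sum.distrib algebra_simps)

lemma adj: "((M::real^'n^'m) *v x) \<bullet> y = x \<bullet> (transpose M *v y)"
  by (metis dot_lmul_matrix inner_commute transpose_matrix_vector)

definition Dm :: "(3 \<Rightarrow> real) \<Rightarrow> real^3^3" where
  "Dm d = (\<chi> i j. if i = j then d i else 0)"

definition Qm :: "(3 \<Rightarrow> real^3) \<Rightarrow> real^3^3" where
  "Qm u = (\<chi> i. u i)"

lemma Dm_mul: "Dm a ** Dm b = Dm (\<lambda>i. a i * b i)"
  by (simp add: vec_eq_iff Dm_def matrix_matrix_mult_def forall_3 sum_3 t3 t3[symmetric])

lemma Dm_transpose: "transpose (Dm a) = Dm a"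
  by (simp add: vec_eq_iff Dm_def transpose_def forall_3 t3 t3[symmetric])

lemma Dm_quad: "z \<bullet> (Dm a *v z) = a 1 * (z$1)^2 + a 2 * (z$2)^2 + a 3 * (z$3)^2"
  by (simp add: Dm_def inner_vec_def matrix_vector_mult_def sum_3 t3 t3[symmetric] power2_eq_square)

lemma Dm_sub1: "Dm a - mat 1 = Dm (\<lambda>i. a i - 1)"
  by (simp add: vec_eq_iff Dm_def mat_def)

lemma Dm_norm2: "(norm (Dm a))^2 = (a 1)^2 + (a 2)^2 + (a 3)^2"
  by (simp add: nsq_mat nsq_vec Dm_def sum_3 t3 t3[symmetric])

lemma Dm_trace: "trace (Dm a) = a 1 + a 2 + a 3"
  unfolding trace_def Dm_def by (simp only: sum_3 vec_lambda_beta simp_thms if_True)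

lemma Dm_det: "det (Dm a) = a 1 * a 2 * a 3"
proof -
  have "det (Dm a) = prod (\<lambda>i. Dm a $i$i) UNIV" by (rule det_diagonal) (simp add: Dm_def)
  also have "\<dots> = a 1 * a 2 * a 3" unfolding Dm_def UNIV_3
    by (simp only: prod.insert finite.emptyI finite_insert insert_iff empty_iff prod.empty t3 t3[symmetric] vec_lambda_beta simp_thms if_True mult_1_right mult.assoc)
  finally show ?thesis .
qed

lemma Qm_orth:
  assumes "\<forall>i j. u i \<bullet> u j = (if i = j then 1 else (0::real))"
  shows "Qm u ** transpose (Qm u) = mat 1" "transpose (Qm u) ** Qm u = mat 1"
proof -
  show 1: "Qm u ** transpose (Qm u) = mat 1"
    using assms by (simp add: vec_eq_iff Qm_def matrix_matrix_mult_def transpose_def mat_def inner_vec_def)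
  then show "transpose (Qm u) ** Qm u = mat 1" using matrix_left_right_inverse by blast
qed

lemma Qm_decomp:
  assumes o: "\<forall>i j. u i \<bullet> u j = (if i = j then 1 else (0::real))"
    and e: "\<forall>i. A *v u i = d i *\<^sub>R u i"
  shows "A = transpose (Qm u) ** Dm d ** Qm u"
proof -
  have "A ** transpose (Qm u) = transpose (Qm u) ** Dm d"
  proof -
    have c: "(\<Sum>m\<in>UNIV. A $ k $ m * u j $ m) = d j * u j $ k" for k j
      using e[rule_format, of j] by (simp add: vec_eq_iff matrix_vector_mult_def)
    show ?thesis
      by (simp add: vec_eq_iff Qm_def Dm_def matrix_matrix_mult_def transpose_def c sum_3 forall_3 t3 t3[symmetric])
  qed
  then have "A ** transpose (Qm u) ** Qm u = transpose (Qm u) ** Dm d ** Qm u" by simp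
  then show ?thesis using Qm_orth(2)[OF o] by (simp add: matrix_mul_assoc[symmetric])
qed



lemma transpose_diff: "transpose ((A::real^'n^'n) - B) = transpose A - transpose B"
  by (simp add: vec_eq_iff transpose_def)

lemma quad_conj: "x \<bullet> ((transpose Q ** M ** Q) *v x) = (Q *v x) \<bullet> (M *v (Q *v (x::real^'n)))"
  by (simp add: matrix_vector_mul_assoc[symmetric] adj)

lemma sqrt_exists:
  assumes "sym_posdef C"
  shows "\<exists>S. sym_posdef S \<and> S ** S = C"
proof -
  have sym: "transpose C = C" and pd: "\<And>x. x \<noteq> 0 \<Longrightarrow> x \<bullet> (C *v x) > 0"
    using assms by (auto simp: sym_posdef_def)
  obtain u :: "3 \<Rightarrow> real^3" and d :: "3 \<Rightarrow> real" where o: "\<forall>i j. u i \<bullet> u j = (if i = j then 1 else (0::real))"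
    and e: "\<forall>i. C *v u i = d i *\<^sub>R u i" using spectral3[OF sym] by metis
  define Q where "Q = Qm u"
  have dec: "C = transpose Q ** Dm d ** Q" using Qm_decomp[OF o e] by (simp add: Q_def)
  have QQ: "Q ** transpose Q = mat 1" "transpose Q ** Q = mat 1" using Qm_orth[OF o] by (simp_all add: Q_def)
  have dpos: "d i > 0" for i
  proof -
    have uu: "u i \<bullet> u i = 1" using o by simp
    then have "u i \<noteq> 0" by auto
    then have "u i \<bullet> (C *v u i) > 0" by (rule pd)
    then show ?thesis using e uu by simp
  qed
  define s where "s = (\<lambda>i. sqrt (d i))"
  define S where "S = transpose Q ** Dm s ** Q"
  have ss: "Dm s ** Dm s = Dm d"
    unfolding Dm_mul s_def using dpos by (simp add: less_imp_le)
  have "S ** S = transpose Q ** Dm s ** (Q ** transpose Q) ** Dm s ** Q"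
    by (simp add: S_def matrix_mul_assoc)
  also have "\<dots> = transpose Q ** (Dm s ** Dm s) ** Q" using QQ by (simp add: matrix_mul_assoc)
  also have "\<dots> = C" using ss dec by simp
  finally have SS: "S ** S = C" .
  have tS: "transpose S = S"
    by (simp add: S_def matrix_transpose_mul Dm_transpose matrix_mul_assoc)
  have "x \<bullet> (S *v x) > 0" if "x \<noteq> 0" for x
  proof -
    have "transpose Q *v (Q *v x) = x" using QQ by (simp add: matrix_vector_mul_assoc)
    then have z: "Q *v x \<noteq> 0" using that by auto
    let ?z = "Q *v x"
    have "x \<bullet> (S *v x) = s 1 * (?z$1)^2 + s 2 * (?z$2)^2 + s 3 * (?z$3)^2"
      unfolding S_def quad_conj Dm_quad ..
    moreover have "s i > 0" for i using dpos by (simp add: s_def)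
    moreover have "?z$1 \<noteq> 0 \<or> ?z$2 \<noteq> 0 \<or> ?z$3 \<noteq> 0" using z by (auto simp: vec_eq_iff forall_3)
    ultimately show ?thesis
      by (smt (verit) mult_pos_pos mult_nonneg_nonneg zero_less_power2 zero_le_power2)
  qed
  then have "sym_posdef S" using tS by (simp add: sym_posdef_def)
  then show ?thesis using SS by blast
qed

lemma sqrt_unique:
  assumes S: "sym_posdef S" and T: "sym_posdef T" and eq: "S ** S = T ** T"
  shows "S = T"
proof -
  define D where "D = S - T"
  have sym: "transpose D = D" using S T by (simp add: D_def transpose_diff sym_posdef_def)
  obtain u :: "3 \<Rightarrow> real^3" and d :: "3 \<Rightarrow> real" where o: "\<forall>i j. u i \<bullet> u j = (if i = j then 1 else (0::real))"
    and e: "\<forall>i. D *v u i = d i *\<^sub>R u i" using spectral3[OF sym] by metis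
  have key: "S ** D + D ** T = 0"
    using eq by (simp add: D_def mm_sub_l mm_sub_r)
  have d0: "d i = 0" for i
  proof -
    let ?v = "u i"
    have "?v \<bullet> ?v = 1" using o by simp
    then have vnz: "?v \<noteq> 0" by auto
    have pS: "?v \<bullet> (S *v ?v) > 0" and pT: "?v \<bullet> (T *v ?v) > 0"
      using S T vnz by (auto simp: sym_posdef_def)
    have "0 = ?v \<bullet> ((S ** D + D ** T) *v ?v)" using key by simp
    also have "\<dots> = ?v \<bullet> (S *v (D *v ?v)) + ?v \<bullet> (D *v (T *v ?v))"
      by (simp add: matrix_vector_mult_add_rdistrib matrix_vector_mul_assoc inner_add_right)
    also have "?v \<bullet> (D *v (T *v ?v)) = (D *v ?v) \<bullet> (T *v ?v)" by (rule sym_inner[OF sym])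
    also have "?v \<bullet> (S *v (D *v ?v)) + (D *v ?v) \<bullet> (T *v ?v) = d i * (?v \<bullet> (S *v ?v) + ?v \<bullet> (T *v ?v))"
      using e by (simp add: matrix_vector_mult_scaleR algebra_simps)
    finally have "d i * (?v \<bullet> (S *v ?v) + ?v \<bullet> (T *v ?v)) = 0" by simp
    then show ?thesis using pS pT by simp
  qed
  have "D = transpose (Qm u) ** Dm d ** Qm u" using Qm_decomp[OF o e] .
  moreover have "Dm d = 0" using d0 by (simp add: Dm_def vec_eq_iff)
  ultimately have "D = 0" by simp
  then show ?thesis by (simp add: D_def)
qed

lemma msqrt_prop:
  assumes "sym_posdef C"
  shows "sym_posdef (msqrt C) \<and> msqrt C ** msqrt C = C"
proof -
  have "\<exists>!S. sym_posdef S \<and> S ** S = C"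
    using sqrt_exists[OF assms] sqrt_unique by metis
  then show ?thesis unfolding msqrt_def by (rule theI')
qed



lemma h_lower:
  fixes x K :: real assumes x: "0 < x" "x \<le> K" and K: "1 \<le> K"
  shows "(x - 1)^2 / (K + 1)^2 \<le> x - 1 - ln x"
proof -
  define r where "r = sqrt x"
  have r: "r > 0" "r * r = x" using x by (simp_all add: r_def)
  have "ln x = 2 * ln r" using x by (simp add: r_def ln_sqrt)
  also have "\<dots> \<le> 2 * (r - 1)" using ln_le_minus_one[OF r(1)] by simp
  finally have l: "ln x \<le> 2 * (r - 1)" .
  have rK: "r \<le> K"
  proof (cases "x \<le> 1")
    case True then have "r \<le> 1" by (simp add: r_def)
    then show ?thesis using K by simp
  next
    case False then have r1: "1 \<le> r" by (simp add: r_def)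
    have "r * 1 \<le> r * r" using r1 r by (intro mult_left_mono) auto
    then have "r \<le> x" using r by simp
    then show ?thesis using x by simp
  qed
  have "(x - 1)^2 = (r - 1)^2 * (r + 1)^2" unfolding r(2)[symmetric] by (simp add: power2_eq_square algebra_simps)
  also have "\<dots> \<le> (r - 1)^2 * (K + 1)^2"
    using rK r by (intro mult_left_mono power_mono) auto
  finally have "(x - 1)^2 / (K + 1)^2 \<le> (r - 1)^2" using K by (simp add: divide_le_eq)
  also have "(r - 1)^2 = x - 2 * r + 1" unfolding r(2)[symmetric] by (simp add: power2_eq_square algebra_simps)
  also have "\<dots> \<le> x - 1 - ln x" using l by simp
  finally show ?thesis .
qed

lemma h_upper:
  fixes x K :: real assumes x: "0 < x" "1 / K \<le> x" and K: "1 \<le> K"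
  shows "x - 1 - ln x \<le> K * (x - 1)^2"
proof -
  have "ln (1/x) \<le> 1/x - 1" using x by (intro ln_le_minus_one) simp
  then have l: "- ln x \<le> 1/x - 1" using x by (simp add: ln_div)
  have "x - 1 - ln x \<le> x - 2 + 1/x" using l by simp
  also have "\<dots> = (x - 1)^2 * (1/x)" using x by (simp add: field_simps power2_eq_square)
  also have "\<dots> \<le> (x - 1)^2 * K"
  proof (intro mult_left_mono)
    show "1/x \<le> K" using x K by (simp add: divide_le_eq mult.commute)
  qed simp
  finally show ?thesis by (simp add: mult.commute)
qed

lemma scalar3:
  fixes a b e K :: real
  assumes pos: "0 < a" "0 < b" "0 < e" and up: "a \<le> K" "b \<le> K" "e \<le> K"
    and lo: "1/K \<le> a" "1/K \<le> b" "1/K \<le> e" and K: "1 \<le> K" and p: "a * b * e = 1"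
  shows "((a-1)^2 + (b-1)^2 + (e-1)^2) / (K + 1)^2 \<le> a + b + e - 3"
    and "a + b + e - 3 \<le> K * ((a-1)^2 + (b-1)^2 + (e-1)^2)"
proof -
  have "ln a + ln b + ln e = ln (a * b * e)" using pos by (simp add: ln_mult)
  then have s: "ln a + ln b + ln e = 0" using p by simp
  have eq: "a + b + e - 3 = (a - 1 - ln a) + (b - 1 - ln b) + (e - 1 - ln e)" using s by simp
  show "((a-1)^2 + (b-1)^2 + (e-1)^2) / (K + 1)^2 \<le> a + b + e - 3"
    using h_lower[OF pos(1) up(1) K] h_lower[OF pos(2) up(2) K] h_lower[OF pos(3) up(3) K]
    unfolding eq by (simp add: add_divide_distrib)
  show "a + b + e - 3 \<le> K * ((a-1)^2 + (b-1)^2 + (e-1)^2)"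
    using h_upper[OF pos(1) lo(1) K] h_upper[OF pos(2) lo(2) K] h_upper[OF pos(3) lo(3) K]
    unfolding eq by (simp add: distrib_left)
qed



lemma tr_sq: "trace ((Y::real^'n^'n) ** transpose Y) = (norm Y)^2"
  unfolding nsq_mat nsq_vec
  by (simp add: trace_def matrix_matrix_mult_def transpose_def power2_eq_square)

lemma norm_conj:
  assumes QQ: "Q ** transpose Q = mat 1" "transpose Q ** Q = mat 1"
  shows "norm (transpose Q ** M ** Q) = norm (M::real^'n^'n)"
proof -
  have "(transpose Q ** M ** Q) ** transpose (transpose Q ** M ** Q) = transpose Q ** (M ** transpose M) ** Q"
    by (simp add: matrix_transpose_mul matrix_mul_assoc) (simp add: matrix_mul_assoc[symmetric] QQ)
  then have "(norm (transpose Q ** M ** Q))^2 = trace (transpose Q ** (M ** transpose M) ** Q)"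
    by (simp add: tr_sq[symmetric])
  also have "\<dots> = trace (Q ** (transpose Q ** (M ** transpose M)))" by (rule trace_mul_sym)
  also have "\<dots> = (norm M)^2" by (simp add: matrix_mul_assoc QQ tr_sq)
  finally show ?thesis by (simp add: power2_eq_iff_nonneg)
qed

lemma inv_props:
  assumes "det (S::real^'n^'n) \<noteq> 0"
  shows "S ** matrix_inv S = mat 1" "matrix_inv S ** S = mat 1"
proof -
  have "invertible S" using assms by (simp add: invertible_det_nz)
  then obtain A' where A': "S ** A' = mat 1" "A' ** S = mat 1" unfolding invertible_def by blast
  have "matrix_inv S = A'" by (rule inv_unique[OF A'(1)])
  then show "S ** matrix_inv S = mat 1" "matrix_inv S ** S = mat 1" using A' by simp_all
qed



lemma core:
  fixes k \<mu> K0 :: real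
  assumes mu: "\<mu> > 0" and K0: "K0 \<ge> 1"
    and C1: "C1 \<in> Mset" and C2: "C2 \<in> Mset"
    and b1: "norm (msqrt C1) \<le> K0" "norm (matrix_inv (msqrt C1)) \<le> K0"
    and b2: "norm (msqrt C2) \<le> K0" "norm (matrix_inv (msqrt C2)) \<le> K0"
  shows "sqrt (\<mu> * (1 / (K0^4 + 1)^2) / 2) / K0^2 * norm (C1 - C2) \<le> Dist k \<mu> C1 C2
       \<and> Dist k \<mu> C1 C2 \<le> sqrt (\<mu> * K0^4 / 2) * K0^2 * norm (C1 - C2)"
proof -
  define K where "K = K0^4"
  have K1: "K \<ge> 1" using K0 by (simp add: K_def one_le_power)
  have spd1: "sym_posdef C1" "det C1 = 1" and spd2: "sym_posdef C2" "det C2 = 1"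
    using C1 C2 by (auto simp: Mset_def)
  define S1 where "S1 = msqrt C1"
  define S2 where "S2 = msqrt C2"
  have S1: "sym_posdef S1" "S1 ** S1 = C1" using msqrt_prop[OF spd1(1)] by (simp_all add: S1_def)
  have S2: "sym_posdef S2" "S2 ** S2 = C2" using msqrt_prop[OF spd2(1)] by (simp_all add: S2_def)
  have dS1: "det S1 * det S1 = 1" using S1(2) spd1(2) by (metis det_mul)
  have dS2: "det S2 * det S2 = 1" using S2(2) spd2(2) by (metis det_mul)
  define P1 where "P1 = matrix_inv S1"
  define P2 where "P2 = matrix_inv S2"
  have "det S1 \<noteq> 0" using dS1 by auto
  then have P1: "S1 ** P1 = mat 1" "P1 ** S1 = mat 1" using inv_props[of S1] by (auto simp: P1_def)
  have "det S2 \<noteq> 0" using dS2 by auto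
  then have P2: "S2 ** P2 = mat 1" "P2 ** S2 = mat 1" using inv_props[of S2] by (auto simp: P2_def)
  have nS1: "norm S1 \<le> K0" "norm P1 \<le> K0" using b1 by (simp_all add: S1_def P1_def)
  have nS2: "norm S2 \<le> K0" "norm P2 \<le> K0" using b2 by (simp_all add: S2_def P2_def)
  have tS2: "transpose S2 = S2" using S2(1) by (simp add: sym_posdef_def)
  have tC1: "transpose C1 = C1" using spd1(1) by (simp add: sym_posdef_def)
  have tP2: "transpose P2 = P2"
  proof -
    have "transpose P2 ** S2 = mat 1" using P2(1) tS2 by (metis matrix_transpose_mul transpose_mat)
    then have "transpose P2 = transpose P2 ** (S2 ** P2)" using P2(1) by simp
    also have "\<dots> = P2" using \<open>transpose P2 ** S2 = mat 1\<close> by (simp add: matrix_mul_assoc)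
    finally show ?thesis .
  qed
  define A where "A = P2 ** C1 ** P2"
  have invC2: "matrix_inv C2 = P2 ** P2"
  proof (rule inv_unique)
    have "C2 ** (P2 ** P2) = S2 ** (S2 ** P2) ** P2" using S2(2) by (simp add: matrix_mul_assoc)
    then show "C2 ** (P2 ** P2) = mat 1" using P2 by simp
  qed
  have dP2: "det P2 * det P2 = 1"
  proof -
    have "det S2 * det P2 = 1" using P2(1) by (metis det_I det_mul)
    then show ?thesis using dS2 by (metis mult.assoc mult.commute mult_1_right)
  qed
  have detX: "det (C1 ** matrix_inv C2) = 1" using spd1(2) dP2 by (simp add: invC2 det_mul)
  have trX: "trace (C1 ** matrix_inv C2) = trace A"
  proof -
    have "trace (C1 ** matrix_inv C2) = trace ((C1 ** P2) ** P2)" by (simp add: invC2 matrix_mul_assoc)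
    also have "\<dots> = trace (P2 ** (C1 ** P2))" by (rule trace_mul_sym)
    finally show ?thesis by (simp add: A_def matrix_mul_assoc)
  qed
  have Dist_eq: "Dist k \<mu> C1 C2 = sqrt (\<mu> / 2 * (trace A - 3))"
    by (simp add: Dist_def psi_el_def detX trX)
  have tA: "transpose A = A" by (simp add: A_def matrix_transpose_mul tP2 tC1 matrix_mul_assoc)
  obtain u :: "3 \<Rightarrow> real^3" and d :: "3 \<Rightarrow> real" where o: "\<forall>i j. u i \<bullet> u j = (if i = j then 1 else (0::real))"
    and e: "\<forall>i. A *v u i = d i *\<^sub>R u i" using spectral3[OF tA] by metis
  define Q where "Q = Qm u"
  have dec: "A = transpose Q ** Dm d ** Q" using Qm_decomp[OF o e] by (simp add: Q_def)
  have QQ: "Q ** transpose Q = mat 1" "transpose Q ** Q = mat 1" using Qm_orth[OF o] by (simp_all add: Q_def)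
  have trA: "trace A = d 1 + d 2 + d 3"
  proof -
    have "trace A = trace ((transpose Q ** Dm d) ** Q)" by (simp add: dec)
    also have "\<dots> = trace (Q ** (transpose Q ** Dm d))" by (rule trace_mul_sym)
    also have "\<dots> = trace (Dm d)" by (simp add: matrix_mul_assoc QQ)
    finally show ?thesis by (simp add: Dm_trace)
  qed
  have detA: "det A = 1"
    using spd1(2) dP2 by (simp add: A_def det_mul mult.commute mult.left_commute)
  have detA': "det A = d 1 * d 2 * d 3"
  proof -
    have "det Q * det Q = 1" using QQ(2) by (metis det_I det_mul det_transpose)
    then show ?thesis by (simp add: dec det_mul Dm_det mult.commute mult.left_commute)
  qed
  define N where "N = norm (A - mat 1)"
  have N2: "N^2 = (d 1 - 1)^2 + (d 2 - 1)^2 + (d 3 - 1)^2"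
  proof -
    have "A - mat 1 = transpose Q ** (Dm d - mat 1) ** Q"
      by (simp add: dec mm_sub_l mm_sub_r QQ)
    then have "N = norm (Dm d - mat 1)" by (simp add: N_def norm_conj[OF QQ])
    then show ?thesis by (simp add: Dm_sub1 Dm_norm2)
  qed
  have nA: "norm A \<le> K"
  proof -
    have "norm A \<le> norm (P2 ** C1) * norm P2" unfolding A_def by (rule norm_mm)
    also have "\<dots> \<le> (norm P2 * norm C1) * norm P2"
      by (intro mult_right_mono norm_mm) simp
    also have "norm C1 \<le> K0 * K0"
    proof -
      have "norm C1 \<le> norm S1 * norm S1" using norm_mm[of S1 S1] S1(2) by simp
      also have "\<dots> \<le> K0 * K0" using nS1 K0 by (intro mult_mono) auto
      finally show ?thesis .
    qed
    then have "(norm P2 * norm C1) * norm P2 \<le> (K0 * (K0 * K0)) * K0"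
      using nS2 K0 by (intro mult_mono) auto
    finally show ?thesis by (simp add: K_def power4_eq_xxxx mult.assoc)
  qed
  define B where "B = S2 ** P1 ** P1 ** S2"
  have BA: "B ** A = mat 1"
  proof -
    have "B ** A = S2 ** P1 ** P1 ** (S2 ** P2) ** C1 ** P2" by (simp add: B_def A_def matrix_mul_assoc)
    also have "\<dots> = S2 ** P1 ** (P1 ** S1) ** S1 ** P2" using P2(1) by (simp add: S1(2)[symmetric] matrix_mul_assoc)
    also have "\<dots> = mat 1" using P1(2) P2(1) by (simp add: matrix_mul_assoc[symmetric])
    finally show ?thesis .
  qed
  have nB: "norm B \<le> K"
  proof -
    have "norm B \<le> norm S2 * norm P1 * norm P1 * norm S2" unfolding B_def
      by (meson norm_mm mult_right_mono norm_ge_zero order_trans)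
    also have "\<dots> \<le> K0 * K0 * K0 * K0" using nS1 nS2 K0 by (intro mult_mono) auto
    finally show ?thesis by (simp add: K_def power4_eq_xxxx)
  qed
  have dbounds: "0 < d i \<and> d i \<le> K \<and> 1 / K \<le> d i" for i
  proof -
    have uu: "u i \<bullet> u i = 1" using o by simp
    then have nu: "norm (u i) = 1" by (simp add: norm_eq_1)
    have unz: "u i \<noteq> 0" using uu by auto
    have pu: "P2 *v u i \<noteq> 0"
    proof
      assume "P2 *v u i = 0"
      then have "S2 *v (P2 *v u i) = 0" by simp
      then show False using P2(1) unz by (simp add: matrix_vector_mul_assoc)
    qed
    have "u i \<bullet> (A *v u i) = (P2 *v u i) \<bullet> (C1 *v (P2 *v u i))"
      by (simp add: A_def matrix_vector_mul_assoc[symmetric] adj tP2)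
    also have "\<dots> > 0" using spd1(1) pu by (simp add: sym_posdef_def)
    finally have "0 < d i" using e uu by simp
    moreover have "d i \<le> K"
    proof -
      have "norm (A *v u i) = \<bar>d i\<bar>" using e nu by simp
      then have "\<bar>d i\<bar> \<le> norm A" using norm_mv[of A "u i"] nu by simp
      then show ?thesis using nA by simp
    qed
    moreover have "1 / K \<le> d i"
    proof -
      have "u i = B *v (A *v u i)" using BA by (simp add: matrix_vector_mul_assoc)
      also have "\<dots> = d i *\<^sub>R (B *v u i)" using e by (simp add: matrix_vector_mult_scaleR)
      finally have "1 = d i * norm (B *v u i)" using nu \<open>0 < d i\<close>
        by (metis abs_of_pos norm_scaleR)
      also have "\<dots> \<le> d i * (norm B * 1)" using norm_mv[of B "u i"] nu \<open>0 < d i\<close>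
        by (intro mult_left_mono) auto
      also have "\<dots> \<le> d i * K" using nB \<open>0 < d i\<close> by simp
      finally show ?thesis using K1 by (simp add: divide_le_eq mult.commute)
    qed
    ultimately show ?thesis by blast
  qed
  have prod: "d 1 * d 2 * d 3 = 1" using detA detA' by simp
  have sc1: "N^2 / (K + 1)^2 \<le> trace A - 3" and sc2: "trace A - 3 \<le> K * N^2"
    using scalar3[of "d 1" "d 2" "d 3" K] dbounds K1 prod unfolding N2 trA by auto
  have CA: "C1 - C2 = S2 ** (A - mat 1) ** S2"
  proof -
    have "S2 ** A ** S2 = (S2 ** P2) ** C1 ** (P2 ** S2)" by (simp add: A_def matrix_mul_assoc)
    then have "S2 ** A ** S2 = C1" using P2 by simp
    then show ?thesis using S2(2) by (simp add: mm_sub_l mm_sub_r)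
  qed
  have AC: "A - mat 1 = P2 ** (C1 - C2) ** P2"
  proof -
    have "P2 ** C2 ** P2 = (P2 ** S2) ** (S2 ** P2)" by (simp add: S2(2)[symmetric] matrix_mul_assoc)
    then have "P2 ** C2 ** P2 = mat 1" using P2 by simp
    then show ?thesis by (simp add: A_def mm_sub_l mm_sub_r)
  qed
  have m3: "norm (X ** Y ** X) \<le> K0^2 * norm Y" if "norm X \<le> K0" for X Y :: "real^3^3"
  proof -
    have "norm (X ** Y ** X) \<le> norm X * norm Y * norm X"
      by (meson norm_mm mult_right_mono norm_ge_zero order_trans)
    also have "\<dots> \<le> K0 * norm Y * K0" using that K0 by (intro mult_mono) auto
    finally show ?thesis by (simp add: power2_eq_square mult.commute mult.left_commute)
  qed
  have r1: "norm (C1 - C2) \<le> K0^2 * N" unfolding CA N_def by (rule m3[OF nS2(1)])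
  have r2: "N \<le> K0^2 * norm (C1 - C2)" unfolding AC N_def by (rule m3[OF nS2(2)])
  have N0: "N \<ge> 0" by (simp add: N_def)
  have K0p: "K0^2 > 0" using K0 by simp
  define c where "c = 1 / (K + 1)^2"
  have c0: "c > 0" using K1 by (simp add: c_def)
  have lower: "sqrt (\<mu> * c / 2) / K0^2 * norm (C1 - C2) \<le> sqrt (\<mu> / 2 * (trace A - 3))"
  proof -
    have "sqrt (\<mu> * c / 2) / K0^2 * norm (C1 - C2) = (norm (C1 - C2) * sqrt (\<mu> * c / 2)) / K0^2" by simp
    also have "\<dots> \<le> (K0^2 * N * sqrt (\<mu> * c / 2)) / K0^2"
      using mu c0 by (intro divide_right_mono mult_right_mono r1) simp_all
    also have "\<dots> = sqrt (\<mu> * c / 2) * N" using K0p by simp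
    also have "\<dots> = sqrt (\<mu> / 2 * (c * N^2))"
    proof -
      have "\<mu> / 2 * (c * N^2) = (\<mu> * c / 2) * N^2" by (simp add: algebra_simps)
      then show ?thesis using N0 by (simp only: real_sqrt_mult real_sqrt_abs abs_of_nonneg)
    qed
    also have "\<dots> \<le> sqrt (\<mu> / 2 * (trace A - 3))"
    proof -
      have "c * N^2 \<le> trace A - 3" using sc1 by (simp add: c_def)
      then have "\<mu> / 2 * (c * N^2) \<le> \<mu> / 2 * (trace A - 3)" using mu by (intro mult_left_mono) auto
      then show ?thesis by (rule real_sqrt_le_mono)
    qed
    finally show ?thesis .
  qed
  have upper: "sqrt (\<mu> / 2 * (trace A - 3)) \<le> sqrt (\<mu> * K / 2) * K0^2 * norm (C1 - C2)"
  proof -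
    have "sqrt (\<mu> / 2 * (trace A - 3)) \<le> sqrt (\<mu> / 2 * (K * N^2))" using sc2 mu by simp
    also have "\<dots> = sqrt (\<mu> * K / 2) * N"
    proof -
      have "\<mu> / 2 * (K * N^2) = (\<mu> * K / 2) * N^2" by (simp add: algebra_simps)
      then show ?thesis using N0 by (simp only: real_sqrt_mult real_sqrt_abs abs_of_nonneg)
    qed
    also have "\<dots> \<le> sqrt (\<mu> * K / 2) * (K0^2 * norm (C1 - C2))" using r2 mu K1 by (intro mult_left_mono) auto
    finally show ?thesis by (simp add: mult.assoc)
  qed
  show ?thesis using lower upper by (simp add: Dist_eq K_def c_def)
qed


theorem mainTheorem3:
  fixes k \<mu> L :: real
  assumes "k > 0" and "\<mu> > 0"
  shows "\<exists>\<epsilon>>0. \<exists>C3>0. \<exists>C4::real.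
    \<forall>C1\<in>Mset. \<forall>C2\<in>Mset.
      frob (msqrt C1) < L \<and> frob (matrix_inv (msqrt C1)) < L \<and>
      frob (msqrt C2) < L \<and> frob (matrix_inv (msqrt C2)) < L \<and>
      frob (C1 - C2) \<le> \<epsilon> \<longrightarrow>
        C3 * frob (C1 - C2) \<le> Dist k \<mu> C1 C2 \<and> Dist k \<mu> C1 C2 \<le> C4 * frob (C1 - C2)"
proof -
  define K0 where "K0 = max L 1"
  have K0: "K0 \<ge> 1" by (simp add: K0_def)
  define C3 where "C3 = sqrt (\<mu> * (1 / (K0^4 + 1)^2) / 2) / K0^2"
  define C4 where "C4 = sqrt (\<mu> * K0^4 / 2) * K0^2"
  have "K0^4 + 1 > 0" using K0 by (simp add: add_pos_nonneg)
  then have C3: "C3 > 0" using assms(2) K0 by (simp add: C3_def)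
  have "\<forall>C1\<in>Mset. \<forall>C2\<in>Mset.
      frob (msqrt C1) < L \<and> frob (matrix_inv (msqrt C1)) < L \<and>
      frob (msqrt C2) < L \<and> frob (matrix_inv (msqrt C2)) < L \<and>
      frob (C1 - C2) \<le> 1 \<longrightarrow>
        C3 * frob (C1 - C2) \<le> Dist k \<mu> C1 C2 \<and> Dist k \<mu> C1 C2 \<le> C4 * frob (C1 - C2)"
  proof (intro ballI impI)
    fix C1 C2 assume C1: "C1 \<in> Mset" and C2: "C2 \<in> Mset"
      and h: "frob (msqrt C1) < L \<and> frob (matrix_inv (msqrt C1)) < L \<and>
      frob (msqrt C2) < L \<and> frob (matrix_inv (msqrt C2)) < L \<and> frob (C1 - C2) \<le> 1"
    have lk: "x < L \<Longrightarrow> x \<le> K0" for x by (simp add: K0_def)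
    show "C3 * frob (C1 - C2) \<le> Dist k \<mu> C1 C2 \<and> Dist k \<mu> C1 C2 \<le> C4 * frob (C1 - C2)"
      using core[OF assms(2) K0 C1 C2, of k] h lk unfolding frob_norm C3_def C4_def by blast
  qed
  then show ?thesis using C3 by (intro exI[of _ 1] exI[of _ C3] exI[of _ C4]) auto
qed

end
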